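(* Let $z\in Z_0$. The element $\tilde z(z)=(\tilde\rho,\tilde v,\tilde m,\tilde\sigma,\tilde p)\in Z$ defined by $\tilde\rho:=1$, $\tilde v:=\frac{m-\rho v}{1-\rho^2}$, $\tilde m:=v-\rho\tilde v$, and $\tilde\sigma+\tilde p\,\mathrm{Id}:=\tilde m\otimes\tilde v+\tilde v\otimes\tilde m$ (i.e. $\tilde\sigma$ is the trace-free part and $\tilde p$ is $\frac1n$ times the trace of the right-hand side) belongs to $\Lambda$, and for every $t\in(-1-\rho,1-\rho)$ there holds $\tilde z(z+t\tilde z(z))=\tilde z(z)$, $T_\pm(z+t\tilde z(z))=T_\pm(z)$, and $M(z+t\tilde z(z))^\circ=M(z)^\circ$.
   Context: Let $n\ge2$, $\mathcal S_0^{n\times n}$ the trace-free symmetric matrices, $Z:=\mathbb{R}\times\mathbb{R}^n\times\mathbb{R}^n\times\mathcal S_0^{n\times n}\times\mathbb{R}$ with elements $z=(\rho,v,m,\sigma,p)$, $Z_0:=\{z:\rho\in(-1,1)\}$. For $z\in Z_0$: $M(z)=\frac{v\otimes v-\rho(m\otimes v+v\otimes m)+m\otimes m}{1-\rho^2}-\sigma$, $T_\pm(z)=\frac{|m\pm v|^2}{n(\rho\pm1)^2}$; for a symmetric matrix $S$, $S^\circ:=S-\frac1n\mathrm{tr}(S)\mathrm{Id}$. Wave cone: $M_\Lambda(\bar z):=\begin{pmatrix}\bar\sigma+\bar p\,\mathrm{Id}&\bar v\\ \bar v^T&0\\ \bar m^T&\bar\rho\end{pmatrix}$, $\Lambda:=\{\bar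 z\in Z:\ker M_\Lambda(\bar z)\ne\{0\},(\bar\rho,\bar v)\ne0\}$. *)

theory Defs
  imports "HOL-Analysis.Analysis"
begin

type_synonym 'n zelem = "real \<times> (real^'n) \<times> (real^'n) \<times> (real^'n^'n) \<times> real"

definition outer :: "real^'n \<Rightarrow> real^'n \<Rightarrow> real^'n^'n" where
  "outer u w = (\<chi> i j. u$i * w$j)"

definition mtrace :: "(real^'n^'n::finite) \<Rightarrow> real" where
  "mtrace A = (\<Sum>i\<in>UNIV. A$i$i)"

definition trfree :: "(real^'n^'n::finite) \<Rightarrow> real^'n^'n" where
  "trfree S = S - (mtrace S / real CARD('n)) *\<^sub>R mat 1"

definition Zset :: "('n::finite) zelem set" where
  "Zset = {(\<rho>, v, m, \<sigma>, p). transpose \<sigma> = \<sigma> \<and> mtrace \<sigma> = 0}"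

definition Z0 :: "('n::finite) zelem set" where
  "Z0 = {z \<in> Zset. fst z \<in> {-1<..<1}}"

definition Mfun :: "('n::finite) zelem \<Rightarrow> real^'n^'n" where
  "Mfun z = (case z of (\<rho>, v, m, \<sigma>, p) \<Rightarrow>
     (1 / (1 - \<rho>^2)) *\<^sub>R (outer v v - \<rho> *\<^sub>R (outer m v + outer v m) + outer m m) - \<sigma>)"

definition Tplus :: "('n::finite) zelem \<Rightarrow> real" where
  "Tplus z = (case z of (\<rho>, v, m, \<sigma>, p) \<Rightarrow>
     (norm (m + v))^2 / (real CARD('n) * (\<rho> + 1)^2))"

definition Tminus :: "('n::finite) zelem \<Rightarrow> real" where
  "Tminus z = (case z of (\<rho>, v, m, \<sigma>, p) \<Rightarrow>
     (norm (m - v))^2 / (real CARD('n) * (\<rho> - 1)^2))"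

text \<open>ker M_Lambda(zb) nontrivial, where M_Lambda(zb) is the (n+2) x (n+1) matrix
  [[sigma + p Id, v], [v^T, 0], [m^T, rho]], acting on (x, s) in R^n x R.\<close>
definition ker_MLambda_nontrivial :: "('n::finite) zelem \<Rightarrow> bool" where
  "ker_MLambda_nontrivial zb = (case zb of (\<rho>, v, m, \<sigma>, p) \<Rightarrow>
     (\<exists>(x::real^'n) (s::real). (x, s) \<noteq> 0 \<and>
        (\<sigma> + p *\<^sub>R mat 1) *v x + s *\<^sub>R v = 0 \<and>
        v \<bullet> x = 0 \<and>
        m \<bullet> x + \<rho> * s = 0))"

definition Lambda :: "('n::finite) zelem set" where
  "Lambda = {zb \<in> Zset. ker_MLambda_nontrivial zb \<and> (fst zb, fst (snd zb)) \<noteq> 0}"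

definition ztilde :: "('n::finite) zelem \<Rightarrow> 'n zelem" where
  "ztilde z = (case z of (\<rho>, v, m, \<sigma>, p) \<Rightarrow>
     (let vt = (1 / (1 - \<rho>^2)) *\<^sub>R (m - \<rho> *\<^sub>R v);
          mt = v - \<rho> *\<^sub>R vt;
          S = outer mt vt + outer vt mt
      in (1, vt, mt, trfree S, mtrace S / real CARD('n))))"

end

theory Submission
  imports Defs
begin

lemma outer_mulv: "outer a b *v x = (b \<bullet> x) *\<^sub>R a"
  by (simp add: vec_eq_iff outer_def matrix_vector_mult_def inner_vec_def sum_distrib_left mult.commute mult.left_commute)

lemma mtrace_add: "mtrace (A + B) = mtrace A + mtrace B"
  by (simp add: mtrace_def sum.distrib)

lemma mtrace_scale: "mtrace (c *\<^sub>R A) = c * mtrace A"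
  by (simp add: mtrace_def sum_distrib_left)

lemma mtrace_id: "mtrace (mat 1 :: real^'n^'n) = real CARD('n)"
  by (simp add: mtrace_def mat_def)

lemma trfree_shift: "trfree (X + c *\<^sub>R (mat 1 :: real^'n^'n)) = trfree X"
proof -
  have n: "real CARD('n) > 0" by simp
  show ?thesis unfolding trfree_def mtrace_add mtrace_scale mtrace_id
    using n by (simp add: algebra_simps add_divide_distrib scaleR_add_left)
qed

lemma trfree_trace: "mtrace (trfree (X::real^'n::finite^'n)) = 0"
proof -
  have n: "real CARD('n) > 0" by simp
  have n2: "CARD('n) > 0" by simp
  show ?thesis unfolding trfree_def using n n2
    by (simp add: mtrace_def sum_subtractf mat_def)
qed

lemma trfree_sym: "transpose X = X \<Longrightarrow> transpose (trfree X) = trfree X"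
  by (simp add: trfree_def transpose_def vec_eq_iff mat_def)

lemma outer_transpose: "transpose (outer a b + outer b a) = outer a b + outer b a"
  by (simp add: transpose_def outer_def vec_eq_iff)

lemma ztilde_form:
  fixes a b :: "real^'n::finite"
  assumes "-1 < r" "r < 1"
  shows "ztilde (r, a + r *\<^sub>R b, b + r *\<^sub>R a, s, p) =
    (1, b, a, trfree (outer a b + outer b a), mtrace (outer a b + outer b a) / real CARD('n))"
proof -
  have d: "1 - r^2 \<noteq> 0" proof -
    have "\<bar>r\<bar> < 1" using assms by linarith
    then have "r^2 < 1" by (simp add: abs_square_less_1)
    then show ?thesis by simp
  qed
  have "b + r *\<^sub>R a - r *\<^sub>R (a + r *\<^sub>R b) = (1 - r^2) *\<^sub>R b"
    by (simp add: algebra_simps power2_eq_square)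
  then have vt: "(1 / (1 - r^2)) *\<^sub>R (b + r *\<^sub>R a - r *\<^sub>R (a + r *\<^sub>R b)) = (b::real^'n)"
    using d by simp
  show ?thesis unfolding ztilde_def prod.case Let_def vt by simp
qed

lemma Mfun_entry:
  fixes r a1 a2 b1 b2 :: real
  assumes d: "1 - r^2 \<noteq> 0"
  shows "(1 / (1 - r^2)) * ((a1 + r * b1) * (a2 + r * b2)
     - r * ((b1 + r * a1) * (a2 + r * b2) + (a1 + r * b1) * (b2 + r * a2))
     + (b1 + r * a1) * (b2 + r * a2)) = a1 * a2 + b1 * b2 + r * (a1 * b2 + b1 * a2)"
proof -
  have "(a1 + r * b1) * (a2 + r * b2)
     - r * ((b1 + r * a1) * (a2 + r * b2) + (a1 + r * b1) * (b2 + r * a2))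
     + (b1 + r * a1) * (b2 + r * a2) = (1 - r^2) * (a1 * a2 + b1 * b2 + r * (a1 * b2 + b1 * a2))"
    by (simp add: algebra_simps power2_eq_square)
  then show ?thesis using d by simp
qed

lemma Mfun_form:
  fixes a b :: "real^'n::finite"
  assumes "-1 < r" "r < 1"
  shows "Mfun (r, a + r *\<^sub>R b, b + r *\<^sub>R a, s, p) =
    outer a a + outer b b + r *\<^sub>R (outer a b + outer b a) - s"
proof -
  have d: "1 - r^2 \<noteq> 0" proof -
    have "\<bar>r\<bar> < 1" using assms by linarith
    then have "r^2 < 1" by (simp add: abs_square_less_1)
    then show ?thesis by simp
  qed
  show ?thesis unfolding Mfun_def
    using Mfun_entry[OF d] by (simp add: vec_eq_iff outer_def)
qed

lemma Tplus_form:
  fixes a b :: "real^'n::finite"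
  assumes "-1 < r" "r < 1"
  shows "Tplus (r, a + r *\<^sub>R b, b + r *\<^sub>R a, s, p) = (norm (a + b))^2 / real CARD('n)"
proof -
  have e: "norm (b + r *\<^sub>R a + (a + r *\<^sub>R b))^2 = (r + 1)^2 * norm (a + b)^2"
  proof -
    have "b + r *\<^sub>R a + (a + r *\<^sub>R b) = (1 + r) *\<^sub>R (a + b)"
      by (simp add: algebra_simps)
    then show ?thesis by (simp add: power_mult_distrib add.commute)
  qed
  have "(r + 1)^2 \<noteq> 0" using assms by simp
  then show ?thesis unfolding Tplus_def by (simp add: e)
qed

lemma Tminus_form:
  fixes a b :: "real^'n::finite"
  assumes "-1 < r" "r < 1"
  shows "Tminus (r, a + r *\<^sub>R b, b + r *\<^sub>R a, s, p) = (norm (b - a))^2 / real CARD('n)"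
proof -
  have e: "norm (b + r *\<^sub>R a - (a + r *\<^sub>R b))^2 = (r - 1)^2 * norm (b - a)^2"
  proof -
    have "b + r *\<^sub>R a - (a + r *\<^sub>R b) = (1 - r) *\<^sub>R (b - a)"
      by (simp add: algebra_simps)
    then show ?thesis by (simp add: power_mult_distrib power2_commute)
  qed
  have "(r - 1)^2 \<noteq> 0" using assms by simp
  then show ?thesis unfolding Tminus_def by (simp add: e)
qed

lemma orth_exists:
  assumes "CARD('n::finite) \<ge> 2"
  shows "\<exists>x::real^'n. x \<noteq> 0 \<and> b \<bullet> x = 0"
proof -
  obtain i j :: 'n where ij: "i \<noteq> j"
  proof -
    have "\<not> (\<forall>i j::'n. i = j)"
    proof
      assume "\<forall>i j::'n. i = j"
      then have "card (UNIV::'n set) \<le> 1" by (simp add: card_le_Suc0_iff_eq)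
      with assms show False by simp
    qed
    then show ?thesis using that by blast
  qed
  show ?thesis
  proof (cases "b $ i = 0")
    case True
    then show ?thesis
      by (intro exI[of _ "axis i 1"]) (simp add: inner_axis axis_eq_0_iff)
  next
    case False
    let ?x = "axis i (b $ j) - axis j (b $ i)"
    have "?x $ j = - b $ i" using ij by (simp add: axis_def)
    then have "?x \<noteq> 0" using False by auto
    moreover have "b \<bullet> ?x = 0" by (simp add: inner_diff_right inner_axis mult.commute)
    ultimately show ?thesis by blast
  qed
qed

theorem lemma3p9:
  fixes z :: "'n::finite zelem"
  assumes "CARD('n) \<ge> 2"
    and "z \<in> Z0"
  shows "ztilde z \<in> Lambda \<and>
    (\<forall>t::real. -1 - fst z < t \<and> t < 1 - fst z \<longrightarrow>
       ztilde (z + t *\<^sub>R ztilde z) = ztilde z \<and>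
       Tplus (z + t *\<^sub>R ztilde z) = Tplus z \<and>
       Tminus (z + t *\<^sub>R ztilde z) = Tminus z \<and>
       trfree (Mfun (z + t *\<^sub>R ztilde z)) = trfree (Mfun z))"
proof -
  obtain r v m s p where z: "z = (r, v, m, s, p)" by (cases z) auto
  have r: "-1 < r" "r < 1" and sy: "transpose s = s" and st: "mtrace s = 0"
    using assms(2) z by (auto simp: Z0_def Zset_def)
  have d: "1 - r^2 \<noteq> 0" proof -
    have "\<bar>r\<bar> < 1" using r by linarith
    then have "r^2 < 1" by (simp add: abs_square_less_1)
    then show ?thesis by simp
  qed
  define b where "b = (1 / (1 - r^2)) *\<^sub>R (m - r *\<^sub>R v)"
  define a where "a = v - r *\<^sub>R b"
  define S where "S = outer a b + outer b a"
  have v: "v = a + r *\<^sub>R b" by (simp add: a_def)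
  have H: "(1 - r^2) *\<^sub>R b = m - r *\<^sub>R v" using d by (simp add: b_def)
  have "b + r *\<^sub>R a = (1 - r^2) *\<^sub>R b + r *\<^sub>R v"
    by (simp add: a_def algebra_simps power2_eq_square)
  then have m: "m = b + r *\<^sub>R a" using H by simp
  have zeq: "z = (r, a + r *\<^sub>R b, b + r *\<^sub>R a, s, p)" using z v m by blast
  have zt: "ztilde z = (1, b, a, trfree S, mtrace S / real CARD('n))"
    unfolding zeq S_def by (rule ztilde_form[OF r])
  have Sdec: "trfree S + (mtrace S / real CARD('n)) *\<^sub>R mat 1 = S"
    by (simp add: trfree_def)
  have lam: "ztilde z \<in> Lambda"
  proof -
    obtain x :: "real^'n" where x: "x \<noteq> 0" "b \<bullet> x = 0"
      using orth_exists[OF assms(1)] by blast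
    have "(trfree S + (mtrace S / real CARD('n)) *\<^sub>R mat 1) *v x + (- (a \<bullet> x)) *\<^sub>R b = 0"
    proof -
      have "S *v x = (a \<bullet> x) *\<^sub>R b" unfolding S_def using x
        by (simp add: matrix_vector_mult_add_rdistrib outer_mulv inner_commute)
      then show ?thesis by (simp only: Sdec) simp
    qed
    moreover have "(x, - (a \<bullet> x)) \<noteq> 0" using x by (simp add: zero_prod_def)
    ultimately have "ker_MLambda_nontrivial (ztilde z)"
      unfolding zt ker_MLambda_nontrivial_def prod.case using x
      by (intro exI[of _ x] exI[of _ "- (a \<bullet> x)"]) simp
    moreover have "ztilde z \<in> Zset"
      unfolding zt Zset_def S_def using trfree_sym[OF outer_transpose] trfree_trace by auto
    moreover have "(fst (ztilde z), fst (snd (ztilde z))) \<noteq> 0" by (simp add: zt zero_prod_def)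
    ultimately show ?thesis by (simp add: Lambda_def)
  qed
  have rest: "ztilde (z + t *\<^sub>R ztilde z) = ztilde z \<and>
       Tplus (z + t *\<^sub>R ztilde z) = Tplus z \<and>
       Tminus (z + t *\<^sub>R ztilde z) = Tminus z \<and>
       trfree (Mfun (z + t *\<^sub>R ztilde z)) = trfree (Mfun z)"
    if t: "-1 - fst z < t" "t < 1 - fst z" for t
  proof -
    have r': "-1 < r + t" "r + t < 1" using t z by auto
    have zz: "z + t *\<^sub>R ztilde z = (r + t, a + (r + t) *\<^sub>R b, b + (r + t) *\<^sub>R a,
        s + t *\<^sub>R trfree S, p + t * (mtrace S / real CARD('n)))"
      unfolding zt by (simp add: zeq algebra_simps)
    have M1: "Mfun (z + t *\<^sub>R ztilde z) = Mfun z + (t * (mtrace S / real CARD('n))) *\<^sub>R mat 1"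
    proof -
      have "Mfun (z + t *\<^sub>R ztilde z) = outer a a + outer b b + (r + t) *\<^sub>R S - (s + t *\<^sub>R trfree S)"
        unfolding zz S_def by (rule Mfun_form[OF r'])
      also have "\<dots> = outer a a + outer b b + r *\<^sub>R S - s + t *\<^sub>R (S - trfree S)"
        by (simp add: algebra_simps)
      also have "S - trfree S = (mtrace S / real CARD('n)) *\<^sub>R mat 1"
        using Sdec by (metis add_diff_cancel_left')
      also have "outer a a + outer b b + r *\<^sub>R S - s = Mfun z"
        unfolding zeq S_def by (rule Mfun_form[OF r, symmetric])
      finally show ?thesis by simp
    qed
    have TP: "Tplus z = (norm (a + b))^2 / real CARD('n)"
      unfolding zeq by (rule Tplus_form[OF r])
    have TM: "Tminus z = (norm (b - a))^2 / real CARD('n)"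
      unfolding zeq by (rule Tminus_form[OF r])
    have "ztilde (z + t *\<^sub>R ztilde z) = ztilde z"
      unfolding zz unfolding zt S_def by (rule ztilde_form[OF r'])
    moreover have "Tplus (z + t *\<^sub>R ztilde z) = Tplus z"
      unfolding TP zz by (rule Tplus_form[OF r'])
    moreover have "Tminus (z + t *\<^sub>R ztilde z) = Tminus z"
      unfolding TM zz by (rule Tminus_form[OF r'])
    moreover have "trfree (Mfun (z + t *\<^sub>R ztilde z)) = trfree (Mfun z)"
      unfolding M1 by (rule trfree_shift)
    ultimately show ?thesis by blast
  qed
  show ?thesis using lam rest by blast
qed

end
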